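(* The uniform chirotopes are exactly the pre-CC-systems.
   Context: Let $E$ be a finite ground set whose elements are called points. Consider a boolean function on all ordered triples of distinct points of $E$; write $pqr$ to mean that the value associated with $(p,q,r)$ is true. The following axioms are understood with quantification over all pairwise distinct points: Axiom 1 (cyclic symmetry): $pqr \Longrightarrow qrp$. Axiom 2 (antisymmetry): $pqr \Longrightarrow \neg\, prq$. Axiom 3 (nondegeneracy): $pqr \vee prq$. Axiom 5 (transitivity): $tsp \wedge tsq \wedge tsr \wedge tpq \wedge tqr \Longrightarrow tpr$. (Given Axioms 1–3, Axiom 5 is equivalent to Axiom 5' (dual transitivity): $tps \wedge tqs \wedge trs \wedge tpq \wedge tqr \Longrightarrow tpr$.) A pre-CC-system is such a boolean function satisfying Axioms 1, 2, 3 and 5. A uniform chirotope is such a boolean function satisfying Axioms 1, 2, 3 and the Grassmann–Plücker relations: for all pairwise distinct points $t,p,q,r,s$, the set $\{(tpq \wedge trs) \vee (tqp \wedge tsr);\ (trp \wedge tqs) \vee (tpr \wedge tsq);\ (tps \wedge tqr) \vee (tsp \wedge trq)\}$ contains both the value true and the value false. *)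

theory Defs
  imports Main
begin

text \<open>A ternary boolean function C on the ground set E; only its values on
  triples of pairwise distinct points of E matter.\<close>

definition distinct3 :: "'a \<Rightarrow> 'a \<Rightarrow> 'a \<Rightarrow> bool" where
  "distinct3 p q r \<longleftrightarrow> p \<noteq> q \<and> p \<noteq> r \<and> q \<noteq> r"

definition axiom1 :: "'a set \<Rightarrow> ('a \<Rightarrow> 'a \<Rightarrow> 'a \<Rightarrow> bool) \<Rightarrow> bool" where
  "axiom1 E C \<longleftrightarrow> (\<forall>p\<in>E. \<forall>q\<in>E. \<forall>r\<in>E. distinct3 p q r \<longrightarrow> C p q r \<longrightarrow> C q r p)"

definition axiom2 :: "'a set \<Rightarrow> ('a \<Rightarrow> 'a \<Rightarrow> 'a \<Rightarrow> bool) \<Rightarrow> bool" where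
  "axiom2 E C \<longleftrightarrow> (\<forall>p\<in>E. \<forall>q\<in>E. \<forall>r\<in>E. distinct3 p q r \<longrightarrow> C p q r \<longrightarrow> \<not> C p r q)"

definition axiom3 :: "'a set \<Rightarrow> ('a \<Rightarrow> 'a \<Rightarrow> 'a \<Rightarrow> bool) \<Rightarrow> bool" where
  "axiom3 E C \<longleftrightarrow> (\<forall>p\<in>E. \<forall>q\<in>E. \<forall>r\<in>E. distinct3 p q r \<longrightarrow> C p q r \<or> C p r q)"

definition axiom5 :: "'a set \<Rightarrow> ('a \<Rightarrow> 'a \<Rightarrow> 'a \<Rightarrow> bool) \<Rightarrow> bool" where
  "axiom5 E C \<longleftrightarrow> (\<forall>t\<in>E. \<forall>s\<in>E. \<forall>p\<in>E. \<forall>q\<in>E. \<forall>r\<in>E.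
      distinct [t, s, p, q, r] \<longrightarrow>
      C t s p \<and> C t s q \<and> C t s r \<and> C t p q \<and> C t q r \<longrightarrow> C t p r)"

definition pre_cc_system :: "'a set \<Rightarrow> ('a \<Rightarrow> 'a \<Rightarrow> 'a \<Rightarrow> bool) \<Rightarrow> bool" where
  "pre_cc_system E C \<longleftrightarrow> axiom1 E C \<and> axiom2 E C \<and> axiom3 E C \<and> axiom5 E C"

definition grassmann_pluecker :: "'a set \<Rightarrow> ('a \<Rightarrow> 'a \<Rightarrow> 'a \<Rightarrow> bool) \<Rightarrow> bool" where
  "grassmann_pluecker E C \<longleftrightarrow> (\<forall>t\<in>E. \<forall>p\<in>E. \<forall>q\<in>E. \<forall>r\<in>E. \<forall>s\<in>E.
      distinct [t, p, q, r, s] \<longrightarrow>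
      (let a = ((C t p q \<and> C t r s) \<or> (C t q p \<and> C t s r));
           b = ((C t r p \<and> C t q s) \<or> (C t p r \<and> C t s q));
           c = ((C t p s \<and> C t q r) \<or> (C t s p \<and> C t r q))
       in True \<in> {a, b, c} \<and> False \<in> {a, b, c}))"

definition uniform_chirotope :: "'a set \<Rightarrow> ('a \<Rightarrow> 'a \<Rightarrow> 'a \<Rightarrow> bool) \<Rightarrow> bool" where
  "uniform_chirotope E C \<longleftrightarrow> axiom1 E C \<and> axiom2 E C \<and> axiom3 E C \<and> grassmann_pluecker E C"

end

theory Submission
  imports Defs
begin

lemma perm6:
  assumes a1: "axiom1 E C" and a2: "axiom2 E C" and a3: "axiom3 E C"
    and m: "a \<in> E" "b \<in> E" "c \<in> E" and d: "distinct [a,b,c]"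
  shows "C b c a = C a b c \<and> C c a b = C a b c \<and> C a c b = (\<not> C a b c)
     \<and> C b a c = (\<not> C a b c) \<and> C c b a = (\<not> C a b c)"
proof -
  have cyc: "\<And>x y z. x \<in> {a,b,c} \<Longrightarrow> y \<in> {a,b,c} \<Longrightarrow> z \<in> {a,b,c} \<Longrightarrow> distinct [x,y,z] \<Longrightarrow> C x y z \<Longrightarrow> C y z x"
    using a1 m unfolding axiom1_def distinct3_def by auto
  have sw: "\<And>x y z. x \<in> E \<Longrightarrow> y \<in> E \<Longrightarrow> z \<in> E \<Longrightarrow> distinct [x,y,z] \<Longrightarrow> C x z y = (\<not> C x y z)"
  proof -
    fix x y z assume h: "x \<in> E" "y \<in> E" "z \<in> E" "distinct [x,y,z]"
    have "C x y z \<longrightarrow> \<not> C x z y" using a2 h unfolding axiom2_def distinct3_def by auto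
    moreover have "C x y z \<or> C x z y" using a3 h unfolding axiom3_def distinct3_def by auto
    ultimately show "C x z y = (\<not> C x y z)" by blast
  qed
  have e1: "C b c a = C a b c" using cyc[of a b c] cyc[of b c a] cyc[of c a b] d by auto
  have e2: "C c a b = C a b c" using cyc[of a b c] cyc[of b c a] cyc[of c a b] d by auto
  have e3: "C a c b = (\<not> C a b c)" using sw[of a b c] m d by auto
  have e4: "C b a c = (\<not> C a b c)" using sw[of b c a] e1 m d by auto
  have e5: "C c b a = (\<not> C a b c)" using sw[of c a b] e2 m d by auto
  show ?thesis using e1 e2 e3 e4 e5 by blast
qed

lemma gp_of_ax5:
  assumes a1: "axiom1 E C" and a2: "axiom2 E C" and a3: "axiom3 E C"
    and m: "t \<in> E" "p \<in> E" "q \<in> E" "r \<in> E" "s \<in> E" and d: "distinct [t,p,q,r,s]"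
    and a5: "axiom5 E C"
  shows "(let a = ((C t p q \<and> C t r s) \<or> (C t q p \<and> C t s r));
           b = ((C t r p \<and> C t q s) \<or> (C t p r \<and> C t s q));
           c = ((C t p s \<and> C t q r) \<or> (C t s p \<and> C t r q))
       in True \<in> {a, b, c} \<and> False \<in> {a, b, c})"
proof -
  have ax5: "\<And>t s p q r. t \<in> E \<Longrightarrow> s \<in> E \<Longrightarrow> p \<in> E \<Longrightarrow> q \<in> E \<Longrightarrow> r \<in> E \<Longrightarrow> distinct [t,s,p,q,r] \<Longrightarrow> C t s p \<and> C t s q \<and> C t s r \<and> C t p q \<and> C t q r \<longrightarrow> C t p r"
    using a5 unfolding axiom5_def by blast
  have P0: "C p q t = C t p q" "C q t p = C t p q" "C t q p = (\<not> C t p q)" "C p t q = (\<not> C t p q)" "C q p t = (\<not> C t p q)"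
    using perm6[OF a1 a2 a3, of t p q] m d by auto
  have P1: "C p r t = C t p r" "C r t p = C t p r" "C t r p = (\<not> C t p r)" "C p t r = (\<not> C t p r)" "C r p t = (\<not> C t p r)"
    using perm6[OF a1 a2 a3, of t p r] m d by auto
  have P2: "C p s t = C t p s" "C s t p = C t p s" "C t s p = (\<not> C t p s)" "C p t s = (\<not> C t p s)" "C s p t = (\<not> C t p s)"
    using perm6[OF a1 a2 a3, of t p s] m d by auto
  have P3: "C q r t = C t q r" "C r t q = C t q r" "C t r q = (\<not> C t q r)" "C q t r = (\<not> C t q r)" "C r q t = (\<not> C t q r)"
    using perm6[OF a1 a2 a3, of t q r] m d by auto
  have P4: "C q s t = C t q s" "C s t q = C t q s" "C t s q = (\<not> C t q s)" "C q t s = (\<not> C t q s)" "C s q t = (\<not> C t q s)"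
    using perm6[OF a1 a2 a3, of t q s] m d by auto
  have P5: "C r s t = C t r s" "C s t r = C t r s" "C t s r = (\<not> C t r s)" "C r t s = (\<not> C t r s)" "C s r t = (\<not> C t r s)"
    using perm6[OF a1 a2 a3, of t r s] m d by auto
  have P6: "C q r p = C p q r" "C r p q = C p q r" "C p r q = (\<not> C p q r)" "C q p r = (\<not> C p q r)" "C r q p = (\<not> C p q r)"
    using perm6[OF a1 a2 a3, of p q r] m d by auto
  have P7: "C q s p = C p q s" "C s p q = C p q s" "C p s q = (\<not> C p q s)" "C q p s = (\<not> C p q s)" "C s q p = (\<not> C p q s)"
    using perm6[OF a1 a2 a3, of p q s] m d by auto
  have P8: "C r s p = C p r s" "C s p r = C p r s" "C p s r = (\<not> C p r s)" "C r p s = (\<not> C p r s)" "C s r p = (\<not> C p r s)"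
    using perm6[OF a1 a2 a3, of p r s] m d by auto
  have P9: "C r s q = C q r s" "C s q r = C q r s" "C q s r = (\<not> C q r s)" "C r q s = (\<not> C q r s)" "C s r q = (\<not> C q r s)"
    using perm6[OF a1 a2 a3, of q r s] m d by auto
  have X0: "C t p q \<and> C t p r \<and> C t p s \<and> C t q r \<and> C t r s \<longrightarrow> C t q s" by (rule ax5) (use m d in auto)
  have X1: "C t p q \<and> C t p s \<and> C t p r \<and> C t q s \<and> C t s r \<longrightarrow> C t q r" by (rule ax5) (use m d in auto)
  have X2: "C t q p \<and> C t q r \<and> C t q s \<and> C t p r \<and> C t r s \<longrightarrow> C t p s" by (rule ax5) (use m d in auto)
  have X3: "C t q p \<and> C t q s \<and> C t q r \<and> C t p s \<and> C t s r \<longrightarrow> C t p r" by (rule ax5) (use m d in auto)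
  have X4: "C t r p \<and> C t r q \<and> C t r s \<and> C t p q \<and> C t q s \<longrightarrow> C t p s" by (rule ax5) (use m d in auto)
  have X5: "C t r p \<and> C t r s \<and> C t r q \<and> C t p s \<and> C t s q \<longrightarrow> C t p q" by (rule ax5) (use m d in auto)
  have X6: "C t s p \<and> C t s q \<and> C t s r \<and> C t p q \<and> C t q r \<longrightarrow> C t p r" by (rule ax5) (use m d in auto)
  have X7: "C t s p \<and> C t s r \<and> C t s q \<and> C t p r \<and> C t r q \<longrightarrow> C t p q" by (rule ax5) (use m d in auto)
  have X8: "C p t q \<and> C p t r \<and> C p t s \<and> C p q r \<and> C p r s \<longrightarrow> C p q s" by (rule ax5) (use m d in auto)
  have X9: "C p t q \<and> C p t s \<and> C p t r \<and> C p q s \<and> C p s r \<longrightarrow> C p q r" by (rule ax5) (use m d in auto)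
  have X10: "C p q t \<and> C p q r \<and> C p q s \<and> C p t r \<and> C p r s \<longrightarrow> C p t s" by (rule ax5) (use m d in auto)
  have X11: "C p q t \<and> C p q s \<and> C p q r \<and> C p t s \<and> C p s r \<longrightarrow> C p t r" by (rule ax5) (use m d in auto)
  have X12: "C p r t \<and> C p r q \<and> C p r s \<and> C p t q \<and> C p q s \<longrightarrow> C p t s" by (rule ax5) (use m d in auto)
  have X13: "C p r t \<and> C p r s \<and> C p r q \<and> C p t s \<and> C p s q \<longrightarrow> C p t q" by (rule ax5) (use m d in auto)
  have X14: "C p s t \<and> C p s q \<and> C p s r \<and> C p t q \<and> C p q r \<longrightarrow> C p t r" by (rule ax5) (use m d in auto)
  have X15: "C p s t \<and> C p s r \<and> C p s q \<and> C p t r \<and> C p r q \<longrightarrow> C p t q" by (rule ax5) (use m d in auto)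
  have X16: "C q t p \<and> C q t r \<and> C q t s \<and> C q p r \<and> C q r s \<longrightarrow> C q p s" by (rule ax5) (use m d in auto)
  have X17: "C q t p \<and> C q t s \<and> C q t r \<and> C q p s \<and> C q s r \<longrightarrow> C q p r" by (rule ax5) (use m d in auto)
  have X18: "C q p t \<and> C q p r \<and> C q p s \<and> C q t r \<and> C q r s \<longrightarrow> C q t s" by (rule ax5) (use m d in auto)
  have X19: "C q p t \<and> C q p s \<and> C q p r \<and> C q t s \<and> C q s r \<longrightarrow> C q t r" by (rule ax5) (use m d in auto)
  have X20: "C q r t \<and> C q r p \<and> C q r s \<and> C q t p \<and> C q p s \<longrightarrow> C q t s" by (rule ax5) (use m d in auto)
  have X21: "C q r t \<and> C q r s \<and> C q r p \<and> C q t s \<and> C q s p \<longrightarrow> C q t p" by (rule ax5) (use m d in auto)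
  have X22: "C q s t \<and> C q s p \<and> C q s r \<and> C q t p \<and> C q p r \<longrightarrow> C q t r" by (rule ax5) (use m d in auto)
  have X23: "C q s t \<and> C q s r \<and> C q s p \<and> C q t r \<and> C q r p \<longrightarrow> C q t p" by (rule ax5) (use m d in auto)
  have X24: "C r t p \<and> C r t q \<and> C r t s \<and> C r p q \<and> C r q s \<longrightarrow> C r p s" by (rule ax5) (use m d in auto)
  have X25: "C r t p \<and> C r t s \<and> C r t q \<and> C r p s \<and> C r s q \<longrightarrow> C r p q" by (rule ax5) (use m d in auto)
  have X26: "C r p t \<and> C r p q \<and> C r p s \<and> C r t q \<and> C r q s \<longrightarrow> C r t s" by (rule ax5) (use m d in auto)
  have X27: "C r p t \<and> C r p s \<and> C r p q \<and> C r t s \<and> C r s q \<longrightarrow> C r t q" by (rule ax5) (use m d in auto)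
  have X28: "C r q t \<and> C r q p \<and> C r q s \<and> C r t p \<and> C r p s \<longrightarrow> C r t s" by (rule ax5) (use m d in auto)
  have X29: "C r q t \<and> C r q s \<and> C r q p \<and> C r t s \<and> C r s p \<longrightarrow> C r t p" by (rule ax5) (use m d in auto)
  have X30: "C r s t \<and> C r s p \<and> C r s q \<and> C r t p \<and> C r p q \<longrightarrow> C r t q" by (rule ax5) (use m d in auto)
  have X31: "C r s t \<and> C r s q \<and> C r s p \<and> C r t q \<and> C r q p \<longrightarrow> C r t p" by (rule ax5) (use m d in auto)
  have X32: "C s t p \<and> C s t q \<and> C s t r \<and> C s p q \<and> C s q r \<longrightarrow> C s p r" by (rule ax5) (use m d in auto)
  have X33: "C s t p \<and> C s t r \<and> C s t q \<and> C s p r \<and> C s r q \<longrightarrow> C s p q" by (rule ax5) (use m d in auto)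
  have X34: "C s p t \<and> C s p q \<and> C s p r \<and> C s t q \<and> C s q r \<longrightarrow> C s t r" by (rule ax5) (use m d in auto)
  have X35: "C s p t \<and> C s p r \<and> C s p q \<and> C s t r \<and> C s r q \<longrightarrow> C s t q" by (rule ax5) (use m d in auto)
  have X36: "C s q t \<and> C s q p \<and> C s q r \<and> C s t p \<and> C s p r \<longrightarrow> C s t r" by (rule ax5) (use m d in auto)
  have X37: "C s q t \<and> C s q r \<and> C s q p \<and> C s t r \<and> C s r p \<longrightarrow> C s t p" by (rule ax5) (use m d in auto)
  have X38: "C s r t \<and> C s r p \<and> C s r q \<and> C s t p \<and> C s p q \<longrightarrow> C s t q" by (rule ax5) (use m d in auto)
  have X39: "C s r t \<and> C s r q \<and> C s r p \<and> C s t q \<and> C s q p \<longrightarrow> C s t p" by (rule ax5) (use m d in auto)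
  show ?thesis using X0 X1 X2 X3 X4 X5 X6 X7 X8 X9 X10 X11 X12 X13 X14 X15 X16 X17 X18 X19 X20 X21 X22 X23 X24 X25 X26 X27 X28 X29 X30 X31 X32 X33 X34 X35 X36 X37 X38 X39 unfolding Let_def P0 P1 P2 P3 P4 P5 P6 P7 P8 P9 insert_iff singleton_iff empty_iff
    by argo
qed

lemma ax5_of_gp:
  assumes a1: "axiom1 E C" and a2: "axiom2 E C" and a3: "axiom3 E C"
    and m: "t \<in> E" "p \<in> E" "q \<in> E" "r \<in> E" "s \<in> E" and d: "distinct [t,p,q,r,s]"
    and g: "grassmann_pluecker E C"
  shows "C t p q \<and> C t p r \<and> C t p s \<and> C t q r \<and> C t r s \<longrightarrow> C t q s"
proof -
  have gp: "(let a = ((C t p q \<and> C t r s) \<or> (C t q p \<and> C t s r));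
           b = ((C t r p \<and> C t q s) \<or> (C t p r \<and> C t s q));
           c = ((C t p s \<and> C t q r) \<or> (C t s p \<and> C t r q))
       in True \<in> {a, b, c} \<and> False \<in> {a, b, c})"
    using g m d unfolding grassmann_pluecker_def by blast
  have P0: "C p q t = C t p q" "C q t p = C t p q" "C t q p = (\<not> C t p q)" "C p t q = (\<not> C t p q)" "C q p t = (\<not> C t p q)"
    using perm6[OF a1 a2 a3, of t p q] m d by auto
  have P1: "C p r t = C t p r" "C r t p = C t p r" "C t r p = (\<not> C t p r)" "C p t r = (\<not> C t p r)" "C r p t = (\<not> C t p r)"
    using perm6[OF a1 a2 a3, of t p r] m d by auto
  have P2: "C p s t = C t p s" "C s t p = C t p s" "C t s p = (\<not> C t p s)" "C p t s = (\<not> C t p s)" "C s p t = (\<not> C t p s)"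
    using perm6[OF a1 a2 a3, of t p s] m d by auto
  have P3: "C q r t = C t q r" "C r t q = C t q r" "C t r q = (\<not> C t q r)" "C q t r = (\<not> C t q r)" "C r q t = (\<not> C t q r)"
    using perm6[OF a1 a2 a3, of t q r] m d by auto
  have P4: "C q s t = C t q s" "C s t q = C t q s" "C t s q = (\<not> C t q s)" "C q t s = (\<not> C t q s)" "C s q t = (\<not> C t q s)"
    using perm6[OF a1 a2 a3, of t q s] m d by auto
  have P5: "C r s t = C t r s" "C s t r = C t r s" "C t s r = (\<not> C t r s)" "C r t s = (\<not> C t r s)" "C s r t = (\<not> C t r s)"
    using perm6[OF a1 a2 a3, of t r s] m d by auto
  have P6: "C q r p = C p q r" "C r p q = C p q r" "C p r q = (\<not> C p q r)" "C q p r = (\<not> C p q r)" "C r q p = (\<not> C p q r)"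
    using perm6[OF a1 a2 a3, of p q r] m d by auto
  have P7: "C q s p = C p q s" "C s p q = C p q s" "C p s q = (\<not> C p q s)" "C q p s = (\<not> C p q s)" "C s q p = (\<not> C p q s)"
    using perm6[OF a1 a2 a3, of p q s] m d by auto
  have P8: "C r s p = C p r s" "C s p r = C p r s" "C p s r = (\<not> C p r s)" "C r p s = (\<not> C p r s)" "C s r p = (\<not> C p r s)"
    using perm6[OF a1 a2 a3, of p r s] m d by auto
  have P9: "C r s q = C q r s" "C s q r = C q r s" "C q s r = (\<not> C q r s)" "C r q s = (\<not> C q r s)" "C s r q = (\<not> C q r s)"
    using perm6[OF a1 a2 a3, of q r s] m d by auto
  show ?thesis using gp unfolding Let_def P0 P1 P2 P3 P4 P5 P6 P7 P8 P9 insert_iff singleton_iff empty_iff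
    by argo
qed

theorem lemma2:
  fixes E :: "'a set" and C :: "'a \<Rightarrow> 'a \<Rightarrow> 'a \<Rightarrow> bool"
  assumes "finite E"
  shows "uniform_chirotope E C \<longleftrightarrow> pre_cc_system E C"
proof
  assume u: "uniform_chirotope E C"
  then have a: "axiom1 E C" "axiom2 E C" "axiom3 E C" "grassmann_pluecker E C"
    unfolding uniform_chirotope_def by auto
  have "axiom5 E C" unfolding axiom5_def
    using ax5_of_gp[OF a(1) a(2) a(3)] a(4) by blast
  then show "pre_cc_system E C" using a unfolding pre_cc_system_def by auto
next
  assume u: "pre_cc_system E C"
  then have a: "axiom1 E C" "axiom2 E C" "axiom3 E C" "axiom5 E C"
    unfolding pre_cc_system_def by auto
  have "grassmann_pluecker E C" unfolding grassmann_pluecker_def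
    using gp_of_ax5[OF a(1) a(2) a(3)] a(4) by blast
  then show "uniform_chirotope E C" using a unfolding uniform_chirotope_def by auto
qed

end
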